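(* Let $q(z)$ be a monic real polynomial of degree $p$ with $q(1)=0$. Then for any polynomial $r(z)$ of degree $p-1$ and any $0<\mu<\ell$, there exists $\nu\in[\mu,\ell]$ such that $$\rho\big(q(z)-\nu\, r(z)\big)\ge\frac{\sqrt{\ell/\mu}-1}{\sqrt{\ell/\mu}+1}.$$
   Context: For a polynomial $s(z)$, $\rho(s)$ denotes the maximum modulus of a (complex) root of $s$. *)

theory Defs
  imports "HOL-Computational_Algebra.Polynomial" Complex_Main
begin

definition rho :: "complex poly \<Rightarrow> real" where
  "rho s = Max (norm ` {z. poly s z = 0})"

end

theory Submission
  imports Defs "HOL-Complex_Analysis.Complex_Analysis"
begin
lemma psi_lt1:
  fixes u :: complex
  assumes "1 - u^2 \<notin> \<real>\<^sub>\<le>\<^sub>0"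
  shows "norm (u / (1 + csqrt (1 - u^2))) < 1"
proof -
  define s where "s = csqrt (1 - u^2)"
  have s2: "s^2 = 1 - u^2" unfolding s_def by simp
  have "Re s > 0"
  proof (rule ccontr)
    assume "\<not> Re s > 0"
    then have "Re s = 0" using Re_csqrt[of "1-u^2"] unfolding s_def by linarith
    then have "Re (s^2) \<le> 0" "Im (s^2) = 0" by (simp_all add: power2_eq_square)
    then have "s^2 \<in> \<real>\<^sub>\<le>\<^sub>0" by (simp add: complex_nonpos_Reals_iff)
    then show False using assms s2 by simp
  qed
  have sq: "(norm (1 - s))^2 < (norm (1 + s))^2"
  proof -
    have "(norm (1 - s))^2 = (1 - Re s)^2 + (Im s)^2" by (simp add: cmod_power2)
    also have "\<dots> < (1 + Re s)^2 + (Im s)^2" using \<open>Re s > 0\<close> by (simp add: power2_eq_square algebra_simps)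
    also have "\<dots> = (norm (1 + s))^2" by (simp add: cmod_power2)
    finally show ?thesis .
  qed
  have lt: "norm (1 - s) < norm (1 + s)"
    using power2_less_imp_less[OF sq norm_ge_zero] .
  have nz: "1 + s \<noteq> 0"
  proof
    assume "1 + s = 0" then have "Re (1 + s) = 0" by simp
    then show False using \<open>Re s > 0\<close> by simp
  qed
  have "u^2 = (1 - s) * (1 + s)" using s2 by (simp add: algebra_simps power2_eq_square)
  then have "(norm u)^2 = norm (1 - s) * norm (1 + s)" by (simp add: norm_mult flip: norm_power)
  also have "\<dots> < norm (1 + s) * norm (1 + s)"
    using lt nz by (intro mult_strict_right_mono) auto
  finally have "(norm u)^2 < (norm (1 + s))^2" by (simp add: power2_eq_square)
  then have "norm u < norm (1 + s)" using power2_less_imp_less[OF _ norm_ge_zero] by blast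
  then show ?thesis using nz by (simp add: s_def norm_divide divide_less_eq)
qed

lemma psi_hol:
  "(\<lambda>u. u / (1 + csqrt (1 - u^2))) holomorphic_on {u. 1 - u^2 \<notin> \<real>\<^sub>\<le>\<^sub>0}"
proof -
  have nz: "1 + csqrt (1 - u^2) \<noteq> 0" if "1 - u^2 \<notin> \<real>\<^sub>\<le>\<^sub>0" for u :: complex
  proof
    assume "1 + csqrt (1 - u^2) = 0"
    then have "csqrt (1 - u^2) = -1" by (simp add: add_eq_0_iff)
    then have "Re (csqrt (1 - u^2)) = -1" by simp
    then show False using Re_csqrt[of "1-u^2"] by simp
  qed
  show ?thesis
    by (intro holomorphic_intros) (use nz in auto)
qed


lemma poly_of_real_map:
  "poly (map_poly complex_of_real p) (of_real x) = of_real (poly p x)"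
  by (induction p) (auto simp: map_poly_pCons)

lemma map_poly_of_real_diff:
  "map_poly complex_of_real (q - smult c r) = map_poly of_real q - smult (of_real c) (map_poly of_real r)"
  by (intro poly_eqI) (simp add: coeff_map_poly)

lemma map_poly_of_real_eq0: "map_poly complex_of_real p = 0 \<longleftrightarrow> p = 0"
  by (rule map_poly_eq_0_iff) auto

lemma degree_map_of_real: "degree (map_poly complex_of_real p) = degree p"
  by (rule degree_map_poly) auto

lemma ratio_value:
  fixes \<mu> L :: real
  assumes "0 < \<mu>" "\<mu> < L"
  shows "((L - \<mu>)/(L + \<mu>)) / (1 + sqrt (1 - ((L - \<mu>)/(L + \<mu>))^2))
     = (sqrt (L / \<mu>) - 1) / (sqrt (L / \<mu>) + 1)"
proof -
  define m l where "m = sqrt \<mu>" and "l = sqrt L"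
  have m: "m > 0" and l: "l > m" using assms by (auto simp: m_def l_def)
  have mu: "\<mu> = m^2" and LL: "L = l^2" using assms by (auto simp: m_def l_def)
  have k: "sqrt (L / \<mu>) = l / m" using m l by (simp add: mu LL real_sqrt_divide)
  have pos: "l^2 + m^2 > 0" using m by (simp add: add_nonneg_pos)
  have "1 - ((L - \<mu>)/(L + \<mu>))^2 = ((l^2+m^2)^2 - (l^2-m^2)^2)/(l^2+m^2)^2"
  proof -
    have ne: "(L + \<mu>)^2 \<noteq> 0" using assms by simp
    have "1 - ((L - \<mu>)/(L + \<mu>))^2 = ((L+\<mu>)^2 - (L-\<mu>)^2)/(L+\<mu>)^2"
      using ne by (simp add: power_divide diff_divide_distrib del: diff_divide_distrib) (simp add: diff_divide_distrib)
    then show ?thesis unfolding mu LL .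
  qed
  also have "(l^2+m^2)^2 - (l^2-m^2)^2 = (2*l*m)^2" by (simp add: power2_eq_square algebra_simps)
  finally have "1 - ((L - \<mu>)/(L + \<mu>))^2 = (2*l*m/(l^2+m^2))^2" by (simp add: power_divide)
  then have "sqrt (1 - ((L - \<mu>)/(L + \<mu>))^2) = 2*l*m/(l^2+m^2)"
    using m l by simp
  then have "((L - \<mu>)/(L + \<mu>)) / (1 + sqrt (1 - ((L - \<mu>)/(L + \<mu>))^2))
     = ((l^2 - m^2)/(l^2+m^2)) / (1 + 2*l*m/(l^2+m^2))" unfolding mu LL by simp
  also have "1 + 2*l*m/(l^2+m^2) = (l+m)^2/(l^2+m^2)"
  proof -
    have "1 + 2*l*m/(l^2+m^2) = ((l^2+m^2) + 2*l*m)/(l^2+m^2)" using pos m by (simp add: add_divide_distrib)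
    also have "(l^2+m^2) + 2*l*m = (l+m)^2" by (simp add: power2_eq_square algebra_simps)
    finally show ?thesis .
  qed
  also have "((l^2 - m^2)/(l^2+m^2)) / ((l+m)^2/(l^2+m^2)) = (l^2 - m^2) / (l+m)^2" using pos
    by simp
  also have "\<dots> = ((l - m)*(l+m))/((l + m)*(l+m))"
    by (simp add: power2_eq_square algebra_simps)
  also have "\<dots> = (l - m)/(l + m)" using m l by simp
  also have "\<dots> = (l/m - 1)/(l/m + 1)"
  proof -
    have "(l/m - 1)/(l/m + 1) = ((l - m)/m)/((l+m)/m)" using m by (simp add: diff_divide_distrib add_divide_distrib)
    also have "\<dots> = (l - m)/(l + m)" using m by simp
    finally show ?thesis by simp
  qed
  finally show ?thesis unfolding k .
qed


theorem theorem25: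
  fixes q r :: "real poly" and p :: nat and \<mu> L :: real
  assumes "lead_coeff q = 1" and "degree q = p" and "poly q 1 = 0"
    and "r \<noteq> 0" and "degree r = p - 1"
    and "0 < \<mu>" and "\<mu> < L"
  shows "\<exists>\<nu>\<in>{\<mu>..L}.
           rho (map_poly of_real (q - smult \<nu> r))
             \<ge> (sqrt (L / \<mu>) - 1) / (sqrt (L / \<mu>) + 1)"
proof (rule ccontr)
  assume H: "\<not> ?thesis"
  define k where "k = sqrt (L / \<mu>)"
  define R where "R = (k - 1) / (k + 1)"
  have k1: "k > 1" using assms(6,7) by (simp add: k_def)
  have R0: "R > 0" and R1: "R < 1" using k1 by (auto simp: R_def)
  have p1: "p \<ge> 1"
  proof (rule ccontr)
    assume "\<not> p \<ge> 1"
    then have "degree q = 0" using assms(2) by simp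
    then have "q = [:1:]" using assms(1) by (metis degree_0_id)
    then show False using assms(3) by simp
  qed
  define Q where "Q = map_poly complex_of_real q"
  define Rr where "Rr = map_poly complex_of_real r"
  have ev: "poly (map_poly of_real (q - smult \<nu> r)) z = poly Q z - of_real \<nu> * poly Rr z" for \<nu> z
    by (simp add: map_poly_of_real_diff Q_def Rr_def)
  have nz: "q - smult \<nu> r \<noteq> 0" for \<nu>
  proof
    assume "q - smult \<nu> r = 0"
    then have "q = smult \<nu> r" by simp
    then have "degree q \<le> degree r" by simp
    then show False using assms(2,5) p1 by simp
  qed
  have roots: "norm z < R" if "\<nu> \<in> {\<mu>..L}" "poly Q z - of_real \<nu> * poly Rr z = 0" for \<nu> z
  proof -
    let ?s = "map_poly complex_of_real (q - smult \<nu> r)"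
    have "?s \<noteq> 0" using nz by (simp add: map_poly_of_real_eq0)
    then have fin: "finite {z. poly ?s z = 0}" by (rule poly_roots_finite)
    have "z \<in> {z. poly ?s z = 0}" using that(2) ev by simp
    then have "norm z \<le> rho ?s" unfolding rho_def using fin by (intro Max_ge) auto
    moreover have "rho ?s < R" using H that(1) unfolding R_def k_def by (auto simp: not_le)
    ultimately show ?thesis by simp
  qed
  define a where "a = (L + \<mu>) / 2"
  define b where "b = (L - \<mu>) / 2"
  have a_in: "a \<in> {\<mu>..L}" using assms(6,7) by (simp add: a_def)
  have apos: "a > 0" "b > 0" using assms(6,7) by (auto simp: a_def b_def)
  define S where "S = map_poly complex_of_real (q - smult a r)"
  have polyS: "poly S z = poly Q z - of_real a * poly Rr z" for z
    unfolding S_def by (rule ev)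
  have degqa: "degree (q - smult a r) = p"
  proof -
    have "degree (- smult a r) < degree q" using assms(2,5) p1 by simp
    then have "degree (q + - smult a r) = degree q" by (rule degree_add_eq_left)
    then show ?thesis using assms(2) by simp
  qed
  have degS: "degree S = p" unfolding S_def by (simp add: degree_map_of_real degqa)
  have lcS: "lead_coeff S = 1"
  proof -
    have "coeff r p = 0" using assms(5) p1 by (intro coeff_eq_0) simp
    then have "coeff (q - smult a r) p = 1" using assms(1,2) by simp
    then show ?thesis unfolding S_def using degS degqa by (simp add: coeff_map_poly S_def)
  qed
  have degRr: "degree Rr = p - 1" unfolding Rr_def by (simp add: degree_map_of_real assms(5))
  define g where "g = reflect_poly S"
  define hr where "hr = reflect_poly Rr"
  define U where "U v = of_real b * v * poly hr v / poly g v" for v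
  define D where "D = {u::complex. 1 - u^2 \<notin> \<real>\<^sub>\<le>\<^sub>0}"
  have Uinv: "poly g v \<noteq> 0 \<and> U v = of_real b * poly Rr (inverse v) / poly S (inverse v)"
    if "v \<noteq> 0" "poly S (inverse v) \<noteq> 0" for v
  proof -
    have g: "poly g v = v^p * poly S (inverse v)" unfolding g_def using that(1) degS
      by (simp add: poly_reflect_poly_nz)
    have h: "poly hr v = v^(p-1) * poly Rr (inverse v)" unfolding hr_def using that(1) degRr
      by (simp add: poly_reflect_poly_nz)
    have vp: "v * v^(p-1) = v^p" using p1 by (metis One_nat_def Suc_diff_le diff_Suc_1 power_Suc)
    have "poly g v \<noteq> 0" using g that by simp
    moreover have "U v = of_real b * poly Rr (inverse v) / poly S (inverse v)"
      unfolding U_def g h using that vp by (simp add: field_simps)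
    ultimately show ?thesis by simp
  qed
  have inD: "poly S z \<noteq> 0 \<and> of_real b * poly Rr z / poly S z \<in> D" if "norm z \<ge> R" for z
  proof -
    have Sz: "poly S z \<noteq> 0" using roots[OF a_in, of z] that polyS by auto
    moreover have "of_real b * poly Rr z / poly S z \<in> D"
    proof (rule ccontr)
      define w where "w = of_real b * poly Rr z / poly S z"
      assume "\<not> ?thesis"
      then have "1 - w^2 \<in> \<real>\<^sub>\<le>\<^sub>0" unfolding D_def w_def by simp
      then obtain t where t: "1 - w^2 = of_real t" "t \<le> 0" by (metis nonpos_Reals_cases)
      define c where "c = sqrt (1 - t)"
      have c1: "c \<ge> 1" using t(2) by (simp add: c_def)
      have "w^2 = of_real (c^2)" using t(1) t(2) by (simp add: c_def algebra_simps)
      then have "(w - of_real c) * (w + of_real c) = 0" by (simp add: algebra_simps power2_eq_square)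
      then have "w = of_real c \<or> w = of_real (- c)" by (auto simp: add_eq_0_iff)
      then obtain x where x: "w = of_real x" "\<bar>x\<bar> \<ge> 1" using c1 by fastforce
      have x0: "x \<noteq> 0" using x(2) by auto
      have "of_real b * poly Rr z = of_real x * poly S z" using Sz x(1) unfolding w_def
        by (simp add: field_simps)
      then have e: "poly Q z - of_real (a + b / x) * poly Rr z = 0"
        using x0 by (simp add: polyS field_simps)
      have "\<bar>b / x\<bar> \<le> b" using x(2) apos x0 by (simp add: abs_div divide_le_eq_1 field_simps)
      then have "- b \<le> b / x" "b / x \<le> b" by (simp_all add: abs_le_iff del: abs_divide)
      moreover have "a - b = \<mu>" "a + b = L" by (simp_all add: a_def b_def field_simps)
      ultimately have "a + b / x \<in> {\<mu>..L}" by auto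
      from roots[OF this e] that show False by simp
    qed
    ultimately show ?thesis by simp
  qed
  define \<Omega> where "\<Omega> = {v. poly g v \<noteq> 0} \<inter> U -` D"
  have openD: "open D"
  proof -
    have "D = (\<lambda>u. 1 - u^2) -` (- \<real>\<^sub>\<le>\<^sub>0)" unfolding D_def by auto
    moreover have "open ((\<lambda>u::complex. 1 - u^2) -` (- \<real>\<^sub>\<le>\<^sub>0))"
      by (intro continuous_open_vimage) (auto intro!: continuous_intros)
    ultimately show ?thesis by simp
  qed
  have openG: "open {v. poly g v \<noteq> 0}"
    by (intro open_Collect_neq continuous_intros)
  have contU: "continuous_on {v. poly g v \<noteq> 0} U"
    unfolding U_def by (intro continuous_intros) auto
  have openO: "open \<Omega>" unfolding \<Omega>_def
    by (rule continuous_open_preimage[OF contU openG openD])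
  have U0: "U 0 = 0" by (simp add: U_def)
  have g0: "poly g 0 = 1" using lcS by (simp add: g_def)
  have D0: "0 \<in> D" by (simp add: D_def)
  have cb: "cball 0 (1/R) \<subseteq> \<Omega>"
  proof
    fix v :: complex assume v: "v \<in> cball 0 (1/R)"
    show "v \<in> \<Omega>"
    proof (cases "v = 0")
      case True then show ?thesis using U0 g0 D0 by (simp add: \<Omega>_def)
    next
      case False
      have "norm v \<le> 1/R" using v by simp
      then have "R \<le> 1 / norm v" using False R0
        by (simp add: field_simps)
      then have "norm (inverse v) \<ge> R" by (simp add: norm_inverse divide_inverse)
      from inD[OF this] Uinv[OF False] show ?thesis by (simp add: \<Omega>_def)
    qed
  qed
  obtain \<epsilon> where eps: "\<epsilon> > 0" "(\<Union>x\<in>cball 0 (1/R). ball x \<epsilon>) \<subseteq> \<Omega>"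
    using compact_subset_open_imp_ball_epsilon_subset[OF compact_cball openO cb] by blast
  define T where "T = 1/R + \<epsilon>"
  have "1/R > 1" using R0 R1 by simp
  then have T: "T > 1" using eps(1) by (simp add: T_def)
  have ballO: "ball 0 T \<subseteq> \<Omega>"
  proof
    fix v :: complex assume v: "v \<in> ball 0 T"
    show "v \<in> \<Omega>"
    proof (cases "norm v \<le> 1/R")
      case True then show ?thesis using cb by auto
    next
      case False
      define x where "x = of_real ((1/R) / norm v) * v"
      have "1/R > 0" using R0 by simp
      then have nv: "norm v > 0" using False by linarith
      have "norm x = ((1/R)/norm v) * norm v" unfolding x_def norm_mult norm_of_real using nv R0 by simp
      then have nx: "norm x = 1/R" using nv by simp
      have xv: "x - v = of_real ((1/R) / norm v - 1) * v" by (simp add: x_def algebra_simps)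
      have lt1: "(1/R) / norm v < 1" using False nv by (metis divide_less_eq_1_pos not_le)
      have "dist x v = \<bar>(1/R) / norm v - 1\<bar> * norm v"
        unfolding dist_norm xv norm_mult norm_of_real ..
      also have "\<bar>(1/R) / norm v - 1\<bar> = 1 - (1/R) / norm v" using lt1 by simp
      also have "(1 - (1/R) / norm v) * norm v = norm v - 1/R" using nv by (simp add: algebra_simps)
      also have "\<dots> < \<epsilon>" using v by (simp add: T_def)
      finally have "v \<in> ball x \<epsilon>" by simp
      moreover have "x \<in> cball 0 (1/R)" using nx by simp
      ultimately show ?thesis using eps(2) by blast
    qed
  qed
  define \<psi> where "\<psi> u = u / (1 + csqrt (1 - u^2))" for u :: complex
  define G where "G w = \<psi> (U (of_real T * w))" for w
  have holU: "U holomorphic_on {v. poly g v \<noteq> 0}"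
    unfolding U_def by (intro holomorphic_intros) auto
  have holG: "G holomorphic_on ball 0 1"
  proof -
    have img: "(\<lambda>w. of_real T * w) ` ball 0 1 \<subseteq> \<Omega>"
    proof
      fix y :: complex assume "y \<in> (\<lambda>w. of_real T * w) ` ball 0 1"
      then obtain w where "norm w < 1" "y = of_real T * w" by auto
      then have "norm y < T" using T by (simp add: norm_mult)
      then show "y \<in> \<Omega>" using ballO by auto
    qed
    have lin: "(\<lambda>w. of_real T * w) holomorphic_on ball 0 1"
      by (intro holomorphic_intros)
    have img2: "(\<lambda>w. of_real T * w) ` ball 0 1 \<subseteq> {v. poly g v \<noteq> 0}"
      using img unfolding \<Omega>_def by blast
    have "(U \<circ> (\<lambda>w. of_real T * w)) holomorphic_on ball 0 1"
      by (rule holomorphic_on_compose_gen[OF lin holU img2])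
    then have h1: "(\<lambda>w. U (of_real T * w)) holomorphic_on ball 0 1"
      by (simp add: o_def)
    have img3: "(\<lambda>w. U (of_real T * w)) ` ball 0 1 \<subseteq> {u. 1 - u^2 \<notin> \<real>\<^sub>\<le>\<^sub>0}"
      using img unfolding \<Omega>_def D_def by blast
    have "((\<lambda>u. u / (1 + csqrt (1 - u^2))) \<circ> (\<lambda>w. U (of_real T * w))) holomorphic_on ball 0 1"
      by (rule holomorphic_on_compose_gen[OF h1 psi_hol img3])
    then show ?thesis unfolding G_def \<psi>_def by (simp add: o_def)
  qed
  have G0: "G 0 = 0" by (simp add: G_def U0 \<psi>_def)
  have Glt: "norm (G w) < 1" if "norm w < 1" for w
  proof -
    have "norm (of_real T * w) < T" using that T by (simp add: norm_mult)
    then have "U (of_real T * w) \<in> D" using ballO by (auto simp: \<Omega>_def)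
    then show ?thesis unfolding G_def \<psi>_def D_def using psi_lt1 by auto
  qed
  have xi: "norm (complex_of_real (1/T)) < 1" unfolding norm_of_real using T by simp
  have schw: "norm (G (of_real (1/T))) \<le> norm (complex_of_real (1/T))"
    by (rule Schwarz_Lemma(1)[OF holG G0 Glt xi])
  have r1: "poly r 1 \<noteq> 0"
  proof
    assume "poly r 1 = 0"
    then have "poly Q 1 - of_real \<mu> * poly Rr 1 = 0"
      using poly_of_real_map[of q 1] poly_of_real_map[of r 1] assms(3) by (simp add: Q_def Rr_def)
    from roots[OF _ this] assms(6,7) R1 show False by simp
  qed
  have U1: "U 1 = of_real (- (b / a))"
  proof -
    have "norm (1::complex) \<ge> R" using R1 by simp
    from inD[OF this] have S1: "poly S 1 \<noteq> 0" by simp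
    have "U 1 = of_real b * poly Rr 1 / poly S 1" using Uinv[of 1] S1 by simp
    also have "poly Rr 1 = of_real (poly r 1)" using poly_of_real_map[of r 1] by (simp add: Rr_def)
    also have "poly S 1 = - of_real a * of_real (poly r 1)"
      using polyS[of 1] poly_of_real_map[of q 1] poly_of_real_map[of r 1] assms(3)
      by (simp add: Q_def Rr_def)
    finally show ?thesis using r1 apos by (simp add: field_simps)
  qed
  have ba: "b / a < 1" "b / a > 0" using apos assms(6,7) by (auto simp: a_def b_def)
  then have ba2: "(b/a)^2 \<le> 1" by (simp add: power_le_one)
  have "G (of_real (1/T)) = \<psi> (of_real (- (b / a)))"
    using T by (simp add: G_def U1)
  also have "\<dots> = of_real (- ((b/a) / (1 + sqrt (1 - (b/a)^2))))"
  proof -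
    from ba2 have "csqrt (1 - (complex_of_real (- (b / a)))^2) = of_real (sqrt (1 - (b/a)^2))"
      by (metis csqrt_of_real diff_ge_0_iff_ge of_real_1 of_real_diff of_real_power power2_minus)
    then show ?thesis by (simp add: \<psi>_def)
  qed
  finally have Geq: "G (of_real (1/T)) = of_real (- ((b/a) / (1 + sqrt (1 - (b/a)^2))))" .
  have "(b/a) / (1 + sqrt (1 - (b/a)^2)) \<ge> 0" using apos ba2
    by (intro divide_nonneg_pos add_pos_nonneg) auto
  then have "norm (G (of_real (1/T))) = (b/a) / (1 + sqrt (1 - (b/a)^2))"
    unfolding Geq norm_of_real abs_minus_cancel by (rule abs_of_nonneg)
  also have "\<dots> = R"
  proof -
    have "b / a = (L - \<mu>)/(L + \<mu>)" using assms(6,7) by (simp add: a_def b_def field_simps)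
    then show ?thesis using ratio_value[OF assms(6,7)] by (simp add: R_def k_def)
  qed
  finally have "R \<le> 1/T" using schw T unfolding norm_of_real by simp
  moreover have "1/T < R"
  proof -
    have t1: "1/R < T" using eps(1) by (simp add: T_def)
    have t2: "1 < T * R" using t1 R0 by (simp add: divide_less_eq)
    show ?thesis using t2 T by (simp add: divide_less_eq mult.commute)
  qed
  ultimately show False by simp
qed

end
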